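(* Let $V$ be the vector module of $gl(m|n)$, $V(\Lambda)$ a finite-dimensional irreducible $gl(m|n)$-module with maximal $\mathbb{Z}$-graded component $V_0(\Lambda)$, and let $\langle\,,\,\rangle$ be the induced non-degenerate invariant sesquilinear form on $V\otimes V(\Lambda)$. If $0\neq v_+\in V\otimes V(\Lambda)$ is a maximal weight vector, then $\langle v_+,V\otimes V_0(\Lambda)\rangle\neq(0)$.
   Context: $L=gl(m|n)$ over $\mathbb{C}$, basis $E_{pq}$ ($1\le p,q\le m+n$), parity $(p)+(q)$ with $(p)=0$ for $p\le m$, $1$ otherwise, graded bracket $[E_{pq},E_{rs}]=\delta_{qr}E_{ps}-(-1)^{((p)+(q))((r)+(s))}\delta_{ps}E_{rq}$; $\mathbb{Z}$-grading $L=L_-\oplus L_0\oplus L_+$ with $L_0=gl(m)\oplus gl(n)$, $L_+=\mathrm{span}\{E_{pq}:p\le m<q\}$, $L_-=\mathrm{span}\{E_{qp}:p\le m<q\}$. The vector module $V$ has basis $|s\rangle$, $E_{pq}|s\rangle=\delta_{qs}|p\rangle$. $V_0(\Lambda)$ is the irreducible $L_0$-submodule of $V(\Lambda)$ generated by the highest weight vector. $V(\Lambda)$ (and likewise $V$) carries a unique non-degenerate sesquilinear form with $\langle av,w\rangle=\langle v,a^\dagger w\rangle$ for $a\in L$, where $(E_{pq})^\dagger=E_{qp}$; the form on $V$ is an inner product. The induced form on $V\otimes V(\Lambda)$ is $\langle v\otimes w,v'\otimes w'\rangle=\langle v,v'\rangle\langle w,w'\rangle$, which is non-degenerate and invariant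 in the same sense. A maximal weight vector is a weight vector annihilated by all $E_{pq}$ with $p<q$. *)

theory Defs
  imports Complex_Main
begin

text \<open>Indices of gl(m|n) (and basis vectors of the vector module V)
  range over {1..m+n}.  A finite-dimensional module W = V(Lambda) is C^d with basis
  indexed by {0..<d}; vectors are functions nat => complex vanishing from d on.
  The action of E_pq on W is the d x d matrix rho p q.  Each basis vector of W is
  homogeneous, with parity wpar j (True = odd).\<close>

definition par :: "nat \<Rightarrow> nat \<Rightarrow> nat" where
  "par m p = (if p \<le> m then 0 else 1)"

definition idx :: "nat \<Rightarrow> nat \<Rightarrow> nat set" where
  "idx m n = {1..m+n}"

definition vecs :: "nat \<Rightarrow> (nat \<Rightarrow> complex) set" where
  "vecs d = {v. \<forall>j. d \<le> j \<longrightarrow> v j = 0}"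

definition mv :: "nat \<Rightarrow> (nat \<Rightarrow> nat \<Rightarrow> complex) \<Rightarrow> (nat \<Rightarrow> complex) \<Rightarrow> (nat \<Rightarrow> complex)" where
  "mv d A v = (\<lambda>i. if i < d then (\<Sum>j<d. A i j * v j) else 0)"

definition gl_module ::
  "nat \<Rightarrow> nat \<Rightarrow> nat \<Rightarrow> (nat \<Rightarrow> bool) \<Rightarrow> (nat \<Rightarrow> nat \<Rightarrow> nat \<Rightarrow> nat \<Rightarrow> complex) \<Rightarrow> bool" where
  "gl_module m n d wpar rho \<longleftrightarrow>
     (\<forall>p\<in>idx m n. \<forall>q\<in>idx m n. \<forall>i<d. \<forall>j<d. rho p q i j \<noteq> 0 \<longrightarrow>
         (wpar i \<longleftrightarrow> (wpar j \<noteq> odd (par m p + par m q)))) \<and>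
     (\<forall>p\<in>idx m n. \<forall>q\<in>idx m n. \<forall>r\<in>idx m n. \<forall>s\<in>idx m n. \<forall>v\<in>vecs d.
        (\<lambda>i. mv d (rho p q) (mv d (rho r s) v) i
              - (-1) ^ ((par m p + par m q) * (par m r + par m s)) * mv d (rho r s) (mv d (rho p q) v) i)
      = (\<lambda>i. (if q = r then mv d (rho p s) v i else 0)
              - (-1) ^ ((par m p + par m q) * (par m r + par m s)) * (if p = s then mv d (rho r q) v i else 0)))"

definition lin_sub :: "nat \<Rightarrow> (nat \<Rightarrow> complex) set \<Rightarrow> bool" where
  "lin_sub d U \<longleftrightarrow> U \<subseteq> vecs d \<and> (\<lambda>_. 0) \<in> U \<and>
     (\<forall>u\<in>U. \<forall>w\<in>U. (\<lambda>i. u i + w i) \<in> U) \<and> (\<forall>c. \<forall>u\<in>U. (\<lambda>i. c * u i) \<in> U)"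

definition graded_sub :: "nat \<Rightarrow> (nat \<Rightarrow> bool) \<Rightarrow> (nat \<Rightarrow> complex) set \<Rightarrow> bool" where
  "graded_sub d wpar U \<longleftrightarrow> lin_sub d U \<and> (\<forall>u\<in>U. (\<lambda>i. if wpar i then 0 else u i) \<in> U)"

definition irreducible_module ::
  "nat \<Rightarrow> nat \<Rightarrow> nat \<Rightarrow> (nat \<Rightarrow> bool) \<Rightarrow> (nat \<Rightarrow> nat \<Rightarrow> nat \<Rightarrow> nat \<Rightarrow> complex) \<Rightarrow> bool" where
  "irreducible_module m n d wpar rho \<longleftrightarrow> gl_module m n d wpar rho \<and> 0 < d \<and>
     (\<forall>U. graded_sub d wpar U \<and> (\<forall>p\<in>idx m n. \<forall>q\<in>idx m n. \<forall>u\<in>U. mv d (rho p q) u \<in> U)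
          \<longrightarrow> U = {\<lambda>_. 0} \<or> U = vecs d)"

text \<open>Highest weight vector of W (distinguished Borel: annihilated by E_pq, p<q).\<close>
definition hw_vector ::
  "nat \<Rightarrow> nat \<Rightarrow> nat \<Rightarrow> (nat \<Rightarrow> nat \<Rightarrow> nat \<Rightarrow> nat \<Rightarrow> complex) \<Rightarrow> (nat \<Rightarrow> complex) \<Rightarrow> bool" where
  "hw_vector m n d rho w0 \<longleftrightarrow> w0 \<in> vecs d \<and> w0 \<noteq> (\<lambda>_. 0) \<and>
     (\<exists>lam. \<forall>i\<in>idx m n. mv d (rho i i) w0 = (\<lambda>j. lam i * w0 j)) \<and>
     (\<forall>p\<in>idx m n. \<forall>q\<in>idx m n. p < q \<longrightarrow> mv d (rho p q) w0 = (\<lambda>_. 0))"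

text \<open>V_0(Lambda): the L_0 = gl(m)+gl(n) submodule generated by w0.\<close>
definition V0 ::
  "nat \<Rightarrow> nat \<Rightarrow> nat \<Rightarrow> (nat \<Rightarrow> nat \<Rightarrow> nat \<Rightarrow> nat \<Rightarrow> complex) \<Rightarrow> (nat \<Rightarrow> complex) \<Rightarrow> (nat \<Rightarrow> complex) set" where
  "V0 m n d rho w0 = \<Inter>{U. lin_sub d U \<and> w0 \<in> U \<and>
      (\<forall>p\<in>idx m n. \<forall>q\<in>idx m n. (p \<le> m \<longleftrightarrow> q \<le> m) \<longrightarrow> (\<forall>u\<in>U. mv d (rho p q) u \<in> U))}"

definition wform :: "nat \<Rightarrow> (nat \<Rightarrow> nat \<Rightarrow> complex) \<Rightarrow> (nat \<Rightarrow> complex) \<Rightarrow> (nat \<Rightarrow> complex) \<Rightarrow> complex" where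
  "wform d G v w = (\<Sum>i<d. \<Sum>j<d. v i * G i j * cnj (w j))"

definition invariant_nondeg_form ::
  "nat \<Rightarrow> nat \<Rightarrow> nat \<Rightarrow> (nat \<Rightarrow> nat \<Rightarrow> nat \<Rightarrow> nat \<Rightarrow> complex) \<Rightarrow> (nat \<Rightarrow> nat \<Rightarrow> complex) \<Rightarrow> bool" where
  "invariant_nondeg_form m n d rho G \<longleftrightarrow>
     (\<forall>v\<in>vecs d. v \<noteq> (\<lambda>_. 0) \<longrightarrow> (\<exists>w\<in>vecs d. wform d G v w \<noteq> 0)) \<and>
     (\<forall>p\<in>idx m n. \<forall>q\<in>idx m n. \<forall>v\<in>vecs d. \<forall>w\<in>vecs d.
        wform d G (mv d (rho p q) v) w = wform d G v (mv d (rho q p) w))"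

text \<open>Tensor product V \<otimes> W: x s j is the coefficient of |s> \<otimes> e_j.\<close>
definition tvecs :: "nat \<Rightarrow> nat \<Rightarrow> nat \<Rightarrow> (nat \<Rightarrow> nat \<Rightarrow> complex) set" where
  "tvecs m n d = {x. \<forall>s j. (s \<notin> idx m n \<or> d \<le> j) \<longrightarrow> x s j = 0}"

text \<open>E_pq (|s> \<otimes> w) = E_pq|s> \<otimes> w + (-1)^(((p)+(q))(s)) |s> \<otimes> E_pq w.\<close>
definition tact ::
  "nat \<Rightarrow> nat \<Rightarrow> nat \<Rightarrow> (nat \<Rightarrow> nat \<Rightarrow> nat \<Rightarrow> nat \<Rightarrow> complex) \<Rightarrow> nat \<Rightarrow> nat
     \<Rightarrow> (nat \<Rightarrow> nat \<Rightarrow> complex) \<Rightarrow> (nat \<Rightarrow> nat \<Rightarrow> complex)" where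
  "tact m n d rho p q x = (\<lambda>s j. if s \<in> idx m n \<and> j < d then
       (if s = p then x q j else 0)
       + (-1) ^ ((par m p + par m q) * par m s) * (\<Sum>j'<d. rho p q j j' * x s j')
     else 0)"

text \<open>Induced form: standard inner product on V times the form on W.\<close>
definition tform :: "nat \<Rightarrow> nat \<Rightarrow> nat \<Rightarrow> (nat \<Rightarrow> nat \<Rightarrow> complex)
     \<Rightarrow> (nat \<Rightarrow> nat \<Rightarrow> complex) \<Rightarrow> (nat \<Rightarrow> nat \<Rightarrow> complex) \<Rightarrow> complex" where
  "tform m n d G x y = (\<Sum>s\<in>idx m n. wform d G (x s) (y s))"

definition maximal_weight_vector ::
  "nat \<Rightarrow> nat \<Rightarrow> nat \<Rightarrow> (nat \<Rightarrow> nat \<Rightarrow> nat \<Rightarrow> nat \<Rightarrow> complex) \<Rightarrow> (nat \<Rightarrow> nat \<Rightarrow> complex) \<Rightarrow> bool" where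
  "maximal_weight_vector m n d rho x \<longleftrightarrow> x \<in> tvecs m n d \<and>
     (\<exists>mu. \<forall>i\<in>idx m n. tact m n d rho i i x = (\<lambda>s j. mu i * x s j)) \<and>
     (\<forall>p\<in>idx m n. \<forall>q\<in>idx m n. p < q \<longrightarrow> tact m n d rho p q x = (\<lambda>_ _. 0))"

end

theory Submission
  imports Defs
begin


lemma vecs_mv: "mv d A v \<in> vecs d"
  by (simp add: vecs_def mv_def)

lemma mv_add: "mv d A (\<lambda>i. x i + y i) = (\<lambda>i. mv d A x i + mv d A y i)"
  by (auto simp: mv_def fun_eq_iff sum.distrib algebra_simps)

lemma mv_scal: "mv d A (\<lambda>i. c * x i) = (\<lambda>i. c * mv d A x i)"
  by (auto simp: mv_def fun_eq_iff sum_distrib_left algebra_simps)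

lemma mv_zero: "mv d A (\<lambda>_. 0) = (\<lambda>_. 0)"
  by (simp add: mv_def fun_eq_iff)

lemma lin_sub_vecs: "lin_sub d (vecs d)"
  by (simp add: lin_sub_def vecs_def)

lemma ls_add: "lin_sub d U \<Longrightarrow> x \<in> U \<Longrightarrow> y \<in> U \<Longrightarrow> (\<lambda>i. x i + y i) \<in> U"
  unfolding lin_sub_def by blast
lemma ls_scal: "lin_sub d U \<Longrightarrow> x \<in> U \<Longrightarrow> (\<lambda>i. c * x i) \<in> U"
  unfolding lin_sub_def by blast
lemma ls_zero: "lin_sub d U \<Longrightarrow> (\<lambda>_. 0) \<in> U"
  unfolding lin_sub_def by blast
lemma ls_vecs: "lin_sub d U \<Longrightarrow> x \<in> U \<Longrightarrow> x \<in> vecs d"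
  unfolding lin_sub_def by blast
lemma ls_diff: "lin_sub d U \<Longrightarrow> x \<in> U \<Longrightarrow> y \<in> U \<Longrightarrow> (\<lambda>i. x i - y i) \<in> U"
proof -
  assume a: "lin_sub d U" "x \<in> U" "y \<in> U"
  have "(\<lambda>i. (-1) * y i) \<in> U" using a ls_scal by blast
  from ls_add[OF a(1) a(2) this] show ?thesis by simp
qed

lemma wform_add1: "wform d G (\<lambda>i. x i + y i) w = wform d G x w + wform d G y w"
  by (simp add: wform_def sum.distrib algebra_simps)
lemma wform_scal1: "wform d G (\<lambda>i. c * x i) w = c * wform d G x w"
  by (simp add: wform_def sum_distrib_left algebra_simps)
lemma wform_add2: "wform d G v (\<lambda>i. x i + y i) = wform d G v x + wform d G v y"
  by (simp add: wform_def sum.distrib algebra_simps)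
lemma wform_scal2: "wform d G v (\<lambda>i. c * x i) = cnj c * wform d G v x"
  by (simp add: wform_def sum_distrib_left algebra_simps)
lemma wform_zero1: "wform d G (\<lambda>_. 0) w = 0"
  by (simp add: wform_def)
lemma wform_zero2: "wform d G v (\<lambda>_. 0) = 0"
  by (simp add: wform_def)
lemma wform_diff1: "wform d G (\<lambda>i. x i - y i) w = wform d G x w - wform d G y w"
  by (simp add: wform_def sum_subtractf algebra_simps)
lemma wform_cong2: "(\<And>j. j < d \<Longrightarrow> x j = y j) \<Longrightarrow> wform d G v x = wform d G v y"
  by (simp add: wform_def)

definition lowcl where
  "lowcl m n d rho u = \<Inter>{D. lin_sub d D \<and> u \<in> D \<and> (\<forall>p\<in>idx m n. \<forall>q\<in>idx m n. q < p \<longrightarrow> (\<forall>t\<in>D. mv d (rho p q) t \<in> D))}"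

lemma lowcl_min: "lin_sub d D \<Longrightarrow> u \<in> D \<Longrightarrow> (\<forall>p\<in>idx m n. \<forall>q\<in>idx m n. q < p \<longrightarrow> (\<forall>t\<in>D. mv d (rho p q) t \<in> D))
   \<Longrightarrow> lowcl m n d rho u \<subseteq> D"
  unfolding lowcl_def by blast

lemma lowcl_props:
  assumes "u \<in> vecs d"
  shows "lin_sub d (lowcl m n d rho u)" "u \<in> lowcl m n d rho u"
    "\<And>p q t. p\<in>idx m n \<Longrightarrow> q\<in>idx m n \<Longrightarrow> q < p \<Longrightarrow> t \<in> lowcl m n d rho u \<Longrightarrow> mv d (rho p q) t \<in> lowcl m n d rho u"
proof -
  have vf: "vecs d \<in> {D. lin_sub d D \<and> u \<in> D \<and> (\<forall>p\<in>idx m n. \<forall>q\<in>idx m n. q < p \<longrightarrow> (\<forall>t\<in>D. mv d (rho p q) t \<in> D))}"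
    using assms lin_sub_vecs vecs_mv by blast
  show "lin_sub d (lowcl m n d rho u)"
    unfolding lin_sub_def
  proof (intro conjI ballI allI)
    show "lowcl m n d rho u \<subseteq> vecs d" using vf unfolding lowcl_def by blast
    show "(\<lambda>_. 0) \<in> lowcl m n d rho u" unfolding lowcl_def using ls_zero by blast
    fix x y assume "x \<in> lowcl m n d rho u" "y \<in> lowcl m n d rho u"
    then show "(\<lambda>i. x i + y i) \<in> lowcl m n d rho u" unfolding lowcl_def using ls_add by blast
  next
    fix c x assume "x \<in> lowcl m n d rho u"
    then show "(\<lambda>i. c * x i) \<in> lowcl m n d rho u" unfolding lowcl_def using ls_scal by blast
  qed
  show "u \<in> lowcl m n d rho u" unfolding lowcl_def by blast
  fix p q t assume "p\<in>idx m n" "q\<in>idx m n" "q < p" "t \<in> lowcl m n d rho u"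
  then show "mv d (rho p q) t \<in> lowcl m n d rho u" unfolding lowcl_def by blast
qed



definition Pv :: "(nat \<Rightarrow> bool) \<Rightarrow> (nat \<Rightarrow> complex) \<Rightarrow> (nat \<Rightarrow> complex)" where
  "Pv wpar w = (\<lambda>i. if wpar i then 0 else w i)"

lemma aux: "a - b = c \<Longrightarrow> a = c + (b::complex)" by (simp add: diff_eq_eq)

lemma comm_rel:
  assumes gl: "gl_module m n d wpar rho" and idx: "p\<in>idx m n" "q\<in>idx m n" "r\<in>idx m n" "s\<in>idx m n"
    and t: "t \<in> vecs d"
  shows "mv d (rho r s) (mv d (rho p q) t) = (\<lambda>i. ((if s = p then mv d (rho r q) t i else 0)
      - (-1) ^ ((par m r + par m s) * (par m p + par m q)) * (if r = q then mv d (rho p s) t i else 0))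
      + (-1) ^ ((par m r + par m s) * (par m p + par m q)) * mv d (rho p q) (mv d (rho r s) t) i)"
proof -
  from gl idx t have e: "(\<lambda>i. mv d (rho r s) (mv d (rho p q) t) i
              - (-1) ^ ((par m r + par m s) * (par m p + par m q)) * mv d (rho p q) (mv d (rho r s) t) i)
      = (\<lambda>i. (if s = p then mv d (rho r q) t i else 0)
              - (-1) ^ ((par m r + par m s) * (par m p + par m q)) * (if r = q then mv d (rho p s) t i else 0))"
    unfolding gl_module_def by blast
  show ?thesis
  proof
    fix i
    from fun_cong[OF e, of i] show "mv d (rho r s) (mv d (rho p q) t) i = ((if s = p then mv d (rho r q) t i else 0)
      - (-1) ^ ((par m r + par m s) * (par m p + par m q)) * (if r = q then mv d (rho p s) t i else 0))
      + (-1) ^ ((par m r + par m s) * (par m p + par m q)) * mv d (rho p q) (mv d (rho r s) t) i"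
      by (rule aux)
  qed
qed

lemma hom_rel:
  assumes gl: "gl_module m n d wpar rho" and idx: "p\<in>idx m n" "q\<in>idx m n"
  shows "mv d (rho p q) (Pv wpar w) = (if even (par m p + par m q) then Pv wpar (mv d (rho p q) w)
          else (\<lambda>i. mv d (rho p q) w i - Pv wpar (mv d (rho p q) w) i))"
proof -
  have c: "\<And>i j. i < d \<Longrightarrow> j < d \<Longrightarrow> rho p q i j \<noteq> 0 \<Longrightarrow> (wpar i \<longleftrightarrow> (wpar j \<noteq> odd (par m p + par m q)))"
    using gl idx unfolding gl_module_def by blast
  show ?thesis
  proof (cases "even (par m p + par m q)")
    case True
    have "\<And>i j. i < d \<Longrightarrow> j < d \<Longrightarrow> rho p q i j * (if wpar j then 0 else w j) = (if wpar i then 0 else rho p q i j * w j)"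
      using c True by (metis mult_zero_left mult_zero_right)
    then have "\<And>i. i < d \<Longrightarrow> (\<Sum>j<d. rho p q i j * (if wpar j then 0 else w j)) = (if wpar i then 0 else (\<Sum>j<d. rho p q i j * w j))"
      by (simp add: sum.neutral)
    then show ?thesis using True by (auto simp: Pv_def mv_def fun_eq_iff)
  next
    case False
    have "\<And>i j. i < d \<Longrightarrow> j < d \<Longrightarrow> rho p q i j * (if wpar j then 0 else w j) = (if wpar i then rho p q i j * w j else 0)"
      using c False by (metis mult_zero_left mult_zero_right)
    then have "\<And>i. i < d \<Longrightarrow> (\<Sum>j<d. rho p q i j * (if wpar j then 0 else w j)) = (if wpar i then (\<Sum>j<d. rho p q i j * w j) else 0)"
      by (simp add: sum.neutral)
    then show ?thesis using False by (auto simp: Pv_def mv_def fun_eq_iff)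
  qed
qed



context
  fixes m n d :: nat and wpar :: "nat \<Rightarrow> bool" and rho :: "nat \<Rightarrow> nat \<Rightarrow> nat \<Rightarrow> nat \<Rightarrow> complex"
    and G :: "nat \<Rightarrow> nat \<Rightarrow> complex" and w0 :: "nat \<Rightarrow> complex"
  assumes irr: "irreducible_module m n d wpar rho"
    and hw: "hw_vector m n d rho w0"
    and inv: "invariant_nondeg_form m n d rho G"
begin

lemma gl: "gl_module m n d wpar rho" using irr irreducible_module_def by blast

lemma Pv_vecs: "w \<in> vecs d \<Longrightarrow> Pv wpar w \<in> vecs d" by (simp add: Pv_def vecs_def)

lemma exists_u: "\<exists>u. u \<in> vecs d \<and> u \<noteq> (\<lambda>_. 0) \<and> (Pv wpar u = u \<or> Pv wpar u = (\<lambda>_. 0)) \<and>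
   (\<forall>p\<in>idx m n. \<forall>q\<in>idx m n. p < q \<longrightarrow> mv d (rho p q) u = (\<lambda>_. 0)) \<and>
   (\<exists>lam. \<forall>i\<in>idx m n. mv d (rho i i) u = (\<lambda>j. lam i * u j))"
proof -
  obtain lam where lam: "\<forall>i\<in>idx m n. mv d (rho i i) w0 = (\<lambda>j. lam i * w0 j)" using hw hw_vector_def by blast
  have up: "\<forall>p\<in>idx m n. \<forall>q\<in>idx m n. p < q \<longrightarrow> mv d (rho p q) w0 = (\<lambda>_. 0)" using hw hw_vector_def by blast
  have w0v: "w0 \<in> vecs d" "w0 \<noteq> (\<lambda>_. 0)" using hw hw_vector_def by auto
  show ?thesis
  proof (cases "Pv wpar w0 = (\<lambda>_. 0)")
    case True
    then show ?thesis using lam up w0v by blast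
  next
    case False
    have pp: "Pv wpar (Pv wpar w0) = Pv wpar w0" by (simp add: Pv_def fun_eq_iff)
    have "\<forall>p\<in>idx m n. \<forall>q\<in>idx m n. p < q \<longrightarrow> mv d (rho p q) (Pv wpar w0) = (\<lambda>_. 0)"
      using up hom_rel[OF gl] by (simp add: Pv_def fun_eq_iff)
    moreover have "\<forall>i\<in>idx m n. mv d (rho i i) (Pv wpar w0) = (\<lambda>j. lam i * Pv wpar w0 j)"
      using lam hom_rel[OF gl] by (simp add: Pv_def fun_eq_iff)
    ultimately show ?thesis using False pp Pv_vecs w0v by blast
  qed
qed

lemma N_full:
  assumes uv: "u \<in> vecs d" and un: "u \<noteq> (\<lambda>_. 0)" and up: "Pv wpar u = u \<or> Pv wpar u = (\<lambda>_. 0)"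
    and uup: "\<forall>p\<in>idx m n. \<forall>q\<in>idx m n. p < q \<longrightarrow> mv d (rho p q) u = (\<lambda>_. 0)"
    and ulam: "\<forall>i\<in>idx m n. mv d (rho i i) u = (\<lambda>j. lam i * u j)"
  shows "lowcl m n d rho u = vecs d"
proof -
  let ?N = "lowcl m n d rho u"
  note P = lowcl_props[OF uv, where m=m and n=n and rho=rho]
  define Good where "Good = {t\<in>?N. \<forall>r\<in>idx m n. \<forall>s\<in>idx m n. r \<le> s \<longrightarrow> mv d (rho r s) t \<in> ?N}"
  have "lin_sub d Good"
    unfolding lin_sub_def
  proof (intro conjI ballI allI)
    show "Good \<subseteq> vecs d" using P(1) ls_vecs unfolding Good_def by blast
    show "(\<lambda>_. 0) \<in> Good" using ls_zero[OF P(1)] unfolding Good_def by (simp add: mv_zero)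
  next
    fix x y assume "x \<in> Good" "y \<in> Good"
    then show "(\<lambda>i. x i + y i) \<in> Good" unfolding Good_def by (auto simp: mv_add intro: ls_add[OF P(1)])
  next
    fix c x assume "x \<in> Good"
    then show "(\<lambda>i. c * x i) \<in> Good" unfolding Good_def by (auto simp: mv_scal intro: ls_scal[OF P(1)])
  qed
  moreover have "u \<in> Good"
    unfolding Good_def
  proof (intro CollectI conjI ballI impI)
    show "u \<in> ?N" using P(2) .
    fix r s assume rs: "r \<in> idx m n" "s \<in> idx m n" "r \<le> s"
    show "mv d (rho r s) u \<in> ?N"
    proof (cases "r = s")
      case True then show ?thesis using ulam rs P ls_scal by metis
    next
      case False then show ?thesis using uup rs P ls_zero by (metis le_neq_implies_less)
    qed
  qed
  moreover have "\<forall>p\<in>idx m n. \<forall>q\<in>idx m n. q < p \<longrightarrow> (\<forall>t\<in>Good. mv d (rho p q) t \<in> Good)"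
  proof (intro ballI impI)
    fix p q t assume pq: "p \<in> idx m n" "q \<in> idx m n" "q < p" and tG: "t \<in> Good"
    have tN: "t \<in> ?N" and tH: "\<And>r s. r\<in>idx m n \<Longrightarrow> s\<in>idx m n \<Longrightarrow> r \<le> s \<Longrightarrow> mv d (rho r s) t \<in> ?N"
      using tG unfolding Good_def by auto
    have allE: "\<And>r s. r\<in>idx m n \<Longrightarrow> s\<in>idx m n \<Longrightarrow> mv d (rho r s) t \<in> ?N"
      using tH P(3) tN by (metis not_le)
    have tv: "t \<in> vecs d" using tN P(1) ls_vecs by blast
    show "mv d (rho p q) t \<in> Good"
      unfolding Good_def
    proof (intro CollectI conjI ballI impI)
      show "mv d (rho p q) t \<in> ?N" using P(3) pq tN by blast
      fix r s assume rs: "r \<in> idx m n" "s \<in> idx m n" "r \<le> s"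
      define e :: complex where "e = (-1) ^ ((par m r + par m s) * (par m p + par m q))"
      have A: "(\<lambda>i. if s = p then mv d (rho r q) t i else 0) \<in> ?N"
      proof (cases "s = p")
        case True then show ?thesis using allE[of r q] rs pq by simp
      next
        case False then show ?thesis using ls_zero[OF P(1)] by simp
      qed
      have B: "(\<lambda>i. e * (if r = q then mv d (rho p s) t i else 0)) \<in> ?N"
      proof (cases "r = q")
        case True then show ?thesis using ls_scal[OF P(1) allE[of p s]] rs pq by simp
      next
        case False then show ?thesis using ls_zero[OF P(1)] by simp
      qed
      have C: "(\<lambda>i. e * mv d (rho p q) (mv d (rho r s) t) i) \<in> ?N"
        using P(3)[OF pq tH[OF rs]] P(1) ls_scal by blast
      have M: "(\<lambda>i. ((if s = p then mv d (rho r q) t i else 0) - e * (if r = q then mv d (rho p s) t i else 0))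
           + e * mv d (rho p q) (mv d (rho r s) t) i) \<in> ?N"
        using ls_add[OF P(1) ls_diff[OF P(1) A B] C] by simp
      have eq: "mv d (rho r s) (mv d (rho p q) t) = (\<lambda>i. ((if s = p then mv d (rho r q) t i else 0) - e * (if r = q then mv d (rho p s) t i else 0))
           + e * mv d (rho p q) (mv d (rho r s) t) i)"
        unfolding e_def by (rule comm_rel[OF gl pq(1,2) rs(1,2) tv])
      show "mv d (rho r s) (mv d (rho p q) t) \<in> ?N"
        unfolding eq by (rule M)
    qed
  qed
  ultimately have NG: "?N \<subseteq> Good" by (rule lowcl_min)
  have stab: "\<And>r s t. r\<in>idx m n \<Longrightarrow> s\<in>idx m n \<Longrightarrow> t \<in> ?N \<Longrightarrow> mv d (rho r s) t \<in> ?N"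
  proof -
    fix r s t assume a: "r\<in>idx m n" "s\<in>idx m n" "t \<in> ?N"
    show "mv d (rho r s) t \<in> ?N"
    proof (cases "r \<le> s")
      case True then show ?thesis using NG a unfolding Good_def by blast
    next
      case False then show ?thesis using P(3) a by simp
    qed
  qed
  define Gr where "Gr = {t\<in>?N. Pv wpar t \<in> ?N}"
  have "lin_sub d Gr"
    unfolding lin_sub_def
  proof (intro conjI ballI allI)
    show "Gr \<subseteq> vecs d" using P(1) ls_vecs unfolding Gr_def by blast
    have "Pv wpar (\<lambda>_. 0) = (\<lambda>_. 0)" by (simp add: Pv_def fun_eq_iff)
    then show "(\<lambda>_. 0) \<in> Gr" using ls_zero[OF P(1)] unfolding Gr_def by simp
  next
    fix x y assume "x \<in> Gr" "y \<in> Gr"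
    moreover have "Pv wpar (\<lambda>i. x i + y i) = (\<lambda>i. Pv wpar x i + Pv wpar y i)" by (simp add: Pv_def fun_eq_iff)
    ultimately show "(\<lambda>i. x i + y i) \<in> Gr" unfolding Gr_def by (auto intro: ls_add[OF P(1)])
  next
    fix c x assume "x \<in> Gr"
    moreover have "Pv wpar (\<lambda>i. c * x i) = (\<lambda>i. c * Pv wpar x i)" by (simp add: Pv_def fun_eq_iff)
    ultimately show "(\<lambda>i. c * x i) \<in> Gr" unfolding Gr_def by (auto intro: ls_scal[OF P(1)])
  qed
  moreover have "u \<in> Gr" using up P(1,2) ls_zero unfolding Gr_def by auto
  moreover have "\<forall>p\<in>idx m n. \<forall>q\<in>idx m n. q < p \<longrightarrow> (\<forall>t\<in>Gr. mv d (rho p q) t \<in> Gr)"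
  proof (intro ballI impI)
    fix p q t assume pq: "p \<in> idx m n" "q \<in> idx m n" "q < p" and tG: "t \<in> Gr"
    have tN: "t \<in> ?N" and tP: "Pv wpar t \<in> ?N" using tG unfolding Gr_def by auto
    have h: "mv d (rho p q) (Pv wpar t) = (if even (par m p + par m q) then Pv wpar (mv d (rho p q) t)
          else (\<lambda>i. mv d (rho p q) t i - Pv wpar (mv d (rho p q) t) i))"
      using hom_rel[OF gl pq(1,2)] .
    have E1: "mv d (rho p q) t \<in> ?N" using P(3) pq tN by blast
    have E2: "mv d (rho p q) (Pv wpar t) \<in> ?N" using P(3) pq tP by blast
    have "Pv wpar (mv d (rho p q) t) \<in> ?N"
    proof (cases "even (par m p + par m q)")
      case True then show ?thesis using h E2 by simp
    next
      case False
      then have "Pv wpar (mv d (rho p q) t) = (\<lambda>i. mv d (rho p q) t i - mv d (rho p q) (Pv wpar t) i)"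
        using h by (simp add: fun_eq_iff)
      then show ?thesis using ls_diff[OF P(1) E1 E2] by simp
    qed
    then show "mv d (rho p q) t \<in> Gr" using E1 unfolding Gr_def by blast
  qed
  ultimately have NGr: "?N \<subseteq> Gr" by (rule lowcl_min)
  have "graded_sub d wpar ?N" unfolding graded_sub_def
    using P(1) NGr unfolding Gr_def Pv_def by blast
  moreover have "\<forall>p\<in>idx m n. \<forall>q\<in>idx m n. \<forall>t\<in>?N. mv d (rho p q) t \<in> ?N" using stab by blast
  ultimately have "?N = {\<lambda>_. 0} \<or> ?N = vecs d" using irr unfolding irreducible_module_def by blast
  then show ?thesis using P(2) un by blast
qed

lemma u_mult:
  assumes uv: "u \<in> vecs d" and un: "u \<noteq> (\<lambda>_. 0)" and up: "Pv wpar u = u \<or> Pv wpar u = (\<lambda>_. 0)"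
    and uup: "\<forall>p\<in>idx m n. \<forall>q\<in>idx m n. p < q \<longrightarrow> mv d (rho p q) u = (\<lambda>_. 0)"
    and ulam: "\<forall>i\<in>idx m n. mv d (rho i i) u = (\<lambda>j. lam i * u j)"
  shows "\<exists>c. u = (\<lambda>i. c * w0 i)"
proof -
  have nd: "\<And>v. v \<in> vecs d \<Longrightarrow> v \<noteq> (\<lambda>_. 0) \<Longrightarrow> \<exists>w\<in>vecs d. wform d G v w \<noteq> 0"
    using inv unfolding invariant_nondeg_form_def by blast
  have iv: "\<And>p q v w. p\<in>idx m n \<Longrightarrow> q\<in>idx m n \<Longrightarrow> v \<in> vecs d \<Longrightarrow> w \<in> vecs d \<Longrightarrow>
      wform d G (mv d (rho p q) v) w = wform d G v (mv d (rho q p) w)"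
    using inv unfolding invariant_nondeg_form_def by blast
  define hwz where "hwz z \<longleftrightarrow> z \<in> vecs d \<and> (\<forall>p\<in>idx m n. \<forall>q\<in>idx m n. p < q \<longrightarrow> mv d (rho p q) z = (\<lambda>_. 0))" for z
  define Ms where "Ms = {t\<in>vecs d. \<exists>c. \<forall>z. hwz z \<longrightarrow> wform d G z t = c * wform d G z u}"
  have "lin_sub d Ms"
    unfolding lin_sub_def
  proof (intro conjI ballI allI)
    show "Ms \<subseteq> vecs d" unfolding Ms_def by blast
    show "(\<lambda>_. 0) \<in> Ms" unfolding Ms_def using ls_zero[OF lin_sub_vecs]
      by (auto simp: wform_zero2 intro: exI[of _ 0])
  next
    fix x y assume "x \<in> Ms" "y \<in> Ms"
    then obtain c1 c2 where x: "x \<in> vecs d" "\<forall>z. hwz z \<longrightarrow> wform d G z x = c1 * wform d G z u"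
      and y: "y \<in> vecs d" "\<forall>z. hwz z \<longrightarrow> wform d G z y = c2 * wform d G z u" unfolding Ms_def by blast
    have "\<forall>z. hwz z \<longrightarrow> wform d G z (\<lambda>i. x i + y i) = (c1 + c2) * wform d G z u"
      using x y by (simp add: wform_add2 algebra_simps)
    then show "(\<lambda>i. x i + y i) \<in> Ms" unfolding Ms_def using ls_add[OF lin_sub_vecs x(1) y(1)] by blast
  next
    fix k x assume "x \<in> Ms"
    then obtain c1 where x: "x \<in> vecs d" "\<forall>z. hwz z \<longrightarrow> wform d G z x = c1 * wform d G z u"
      unfolding Ms_def by blast
    have "\<forall>z. hwz z \<longrightarrow> wform d G z (\<lambda>i. k * x i) = (cnj k * c1) * wform d G z u"
      using x by (simp add: wform_scal2 algebra_simps)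
    then show "(\<lambda>i. k * x i) \<in> Ms" unfolding Ms_def using ls_scal[OF lin_sub_vecs x(1)] by blast
  qed
  moreover have "u \<in> Ms" unfolding Ms_def using uv by (auto intro: exI[of _ 1])
  moreover have "\<forall>p\<in>idx m n. \<forall>q\<in>idx m n. q < p \<longrightarrow> (\<forall>t\<in>Ms. mv d (rho p q) t \<in> Ms)"
  proof (intro ballI impI)
    fix p q t assume pq: "p \<in> idx m n" "q \<in> idx m n" "q < p" and t: "t \<in> Ms"
    have tv: "t \<in> vecs d" using t Ms_def by blast
    have "\<forall>z. hwz z \<longrightarrow> wform d G z (mv d (rho p q) t) = 0 * wform d G z u"
    proof (intro allI impI)
      fix z assume z: "hwz z"
      have "wform d G z (mv d (rho p q) t) = wform d G (mv d (rho q p) z) t"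
        using iv[OF pq(2,1) _ tv, of z] z hwz_def by simp
      also have "\<dots> = 0" using z pq unfolding hwz_def by (simp add: wform_zero1)
      finally show "wform d G z (mv d (rho p q) t) = 0 * wform d G z u" by simp
    qed
    then show "mv d (rho p q) t \<in> Ms" unfolding Ms_def using vecs_mv by blast
  qed
  ultimately have "lowcl m n d rho u \<subseteq> Ms" by (rule lowcl_min)
  then have all: "\<And>t. t \<in> vecs d \<Longrightarrow> \<exists>c. \<forall>z. hwz z \<longrightarrow> wform d G z t = c * wform d G z u"
    using N_full[OF uv un up uup ulam] unfolding Ms_def by blast
  have w0v: "w0 \<in> vecs d" "w0 \<noteq> (\<lambda>_. 0)" using hw hw_vector_def by auto
  have hw0: "hwz w0" using hw unfolding hw_vector_def hwz_def by blast
  have hu: "hwz u" using uv uup unfolding hwz_def by blast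
  define al where "al = wform d G w0 u"
  define be where "be = wform d G u u"
  define zz where "zz = (\<lambda>i. be * w0 i + (- al) * u i)"
  have zzv: "zz \<in> vecs d" unfolding zz_def
    using w0v(1) uv by (simp add: vecs_def)
  have hzz: "hwz zz" unfolding hwz_def
  proof (intro conjI ballI impI)
    show "zz \<in> vecs d" by (rule zzv)
    fix p q assume "p \<in> idx m n" "q \<in> idx m n" "p < q"
    moreover have "mv d (rho p q) zz = (\<lambda>i. be * mv d (rho p q) w0 i + (-al) * mv d (rho p q) u i)"
      unfolding zz_def by (simp only: mv_add mv_scal)
    ultimately show "mv d (rho p q) zz = (\<lambda>_. 0)" using hw0 hu unfolding hwz_def
      by simp
  qed
  have zzu: "wform d G zz u = 0" unfolding zz_def
    by (simp only: wform_add1 wform_scal1) (simp add: al_def be_def)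
  have "\<forall>t\<in>vecs d. wform d G zz t = 0"
  proof
    fix t assume "t \<in> vecs d"
    then obtain c where "\<forall>z. hwz z \<longrightarrow> wform d G z t = c * wform d G z u" using all by blast
    then show "wform d G zz t = 0" using hzz zzu by simp
  qed
  then have zz0: "zz = (\<lambda>_. 0)" using nd zzv by blast
  have "be \<noteq> 0"
  proof
    assume b0: "be = 0"
    have "\<forall>t\<in>vecs d. wform d G u t = 0"
    proof
      fix t assume "t \<in> vecs d"
      then obtain c where "\<forall>z. hwz z \<longrightarrow> wform d G z t = c * wform d G z u" using all by blast
      then show "wform d G u t = 0" using hu b0 be_def by simp
    qed
    then show False using nd uv un by blast
  qed
  have eqs: "\<And>i. be * w0 i = al * u i" using fun_cong[OF zz0] unfolding zz_def by simp
  have "al \<noteq> 0"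
  proof
    assume "al = 0"
    then have "w0 = (\<lambda>_. 0)" using eqs \<open>be \<noteq> 0\<close> by (simp add: fun_eq_iff)
    then show False using w0v by blast
  qed
  then have "u = (\<lambda>i. (be / al) * w0 i)" using eqs by (simp add: fun_eq_iff field_simps)
  then show ?thesis by blast
qed

lemma gen_full:
  assumes D: "lin_sub d D" "w0 \<in> D" "\<forall>p\<in>idx m n. \<forall>q\<in>idx m n. q < p \<longrightarrow> (\<forall>t\<in>D. mv d (rho p q) t \<in> D)"
  shows "vecs d \<subseteq> D"
proof -
  obtain u lam where uv: "u \<in> vecs d" and un: "u \<noteq> (\<lambda>_. 0)" and up: "Pv wpar u = u \<or> Pv wpar u = (\<lambda>_. 0)"
    and uup: "\<forall>p\<in>idx m n. \<forall>q\<in>idx m n. p < q \<longrightarrow> mv d (rho p q) u = (\<lambda>_. 0)"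
    and ulam: "\<forall>i\<in>idx m n. mv d (rho i i) u = (\<lambda>j. lam i * u j)"
    using exists_u by blast
  obtain c where "u = (\<lambda>i. c * w0 i)" using u_mult[OF uv un up uup ulam] by blast
  then have "u \<in> D" using ls_scal[OF D(1) D(2)] by simp
  then have "lowcl m n d rho u \<subseteq> D" using lowcl_min D by blast
  then show ?thesis using N_full[OF uv un up uup ulam] by simp
qed

end


definition es :: "nat \<Rightarrow> (nat \<Rightarrow> complex) \<Rightarrow> nat \<Rightarrow> nat \<Rightarrow> complex" where
  "es s w = (\<lambda>s' j. if s' = s then w j else 0)"

lemma finite_idx: "finite (idx m n)" by (simp add: idx_def)

lemma tform_es: "s \<in> idx m n \<Longrightarrow> tform m n d G x (es s w) = wform d G (x s) w"
proof -
  assume s: "s \<in> idx m n"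
  have "tform m n d G x (es s w) = (\<Sum>s'\<in>idx m n. if s' = s then wform d G (x s) w else 0)"
    unfolding tform_def
    by (rule sum.cong) (auto simp: es_def wform_zero2)
  also have "\<dots> = wform d G (x s) w" using s finite_idx by simp
  finally show ?thesis .
qed

lemma tform_lin2: "tform m n d G x (\<lambda>s j. a * y s j + b * z s j) = cnj a * tform m n d G x y + cnj b * tform m n d G x z"
proof -
  have "\<And>s. wform d G (x s) (\<lambda>j. a * y s j + b * z s j) = cnj a * wform d G (x s) (y s) + cnj b * wform d G (x s) (z s)"
    by (simp only: wform_add2 wform_scal2)
  then show ?thesis unfolding tform_def by (simp add: sum.distrib sum_distrib_left)
qed

lemma cnj_sign: "cnj ((-1::complex) ^ k) = (-1) ^ k" by simp

lemma tact_comp: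
  assumes "s \<in> idx m n" "y \<in> tvecs m n d"
  shows "tact m n d rho p q y s = (\<lambda>j. (if s = p then 1 else 0) * y q j
      + (-1) ^ ((par m p + par m q) * par m s) * mv d (rho p q) (y s) j)"
  using assms by (auto simp: tact_def mv_def tvecs_def fun_eq_iff)

lemma tact_inv:
  assumes inv: "invariant_nondeg_form m n d rho G"
    and x: "x \<in> tvecs m n d" and y: "y \<in> tvecs m n d" and pq: "p \<in> idx m n" "q \<in> idx m n"
  shows "tform m n d G x (tact m n d rho p q y) = tform m n d G (tact m n d rho q p x) y"
proof -
  have iv: "\<And>p q v w. p\<in>idx m n \<Longrightarrow> q\<in>idx m n \<Longrightarrow> v \<in> vecs d \<Longrightarrow> w \<in> vecs d \<Longrightarrow>
      wform d G (mv d (rho p q) v) w = wform d G v (mv d (rho q p) w)"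
    using inv unfolding invariant_nondeg_form_def by blast
  have xv: "\<And>s. x s \<in> vecs d" and yv: "\<And>s. y s \<in> vecs d" using x y by (auto simp: tvecs_def vecs_def)
  define sg where "sg s = ((-1::complex) ^ ((par m p + par m q) * par m s))" for s
  have sg': "\<And>s. (-1::complex) ^ ((par m q + par m p) * par m s) = sg s" by (simp add: sg_def add.commute)
  have L: "\<And>s. s \<in> idx m n \<Longrightarrow> wform d G (x s) (tact m n d rho p q y s)
      = (if s = p then wform d G (x p) (y q) else 0) + sg s * wform d G (mv d (rho q p) (x s)) (y s)"
  proof -
    fix s assume s: "s \<in> idx m n"
    have "wform d G (x s) (tact m n d rho p q y s) = cnj (if s = p then 1 else 0) * wform d G (x s) (y q)
       + cnj (sg s) * wform d G (x s) (mv d (rho p q) (y s))"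
      unfolding tact_comp[OF s y] sg_def[symmetric] by (simp only: wform_add2 wform_scal2)
    also have "\<dots> = (if s = p then wform d G (x p) (y q) else 0) + sg s * wform d G (mv d (rho q p) (x s)) (y s)"
      using iv[OF pq(2,1) xv yv] by (simp add: sg_def)
    finally show "wform d G (x s) (tact m n d rho p q y s) = (if s = p then wform d G (x p) (y q) else 0) + sg s * wform d G (mv d (rho q p) (x s)) (y s)" .
  qed
  have R: "\<And>s. s \<in> idx m n \<Longrightarrow> wform d G (tact m n d rho q p x s) (y s)
      = (if s = q then wform d G (x p) (y q) else 0) + sg s * wform d G (mv d (rho q p) (x s)) (y s)"
  proof -
    fix s assume s: "s \<in> idx m n"
    have "wform d G (tact m n d rho q p x s) (y s) = (if s = q then 1 else 0) * wform d G (x p) (y s)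
       + sg s * wform d G (mv d (rho q p) (x s)) (y s)"
      unfolding tact_comp[OF s x] sg' by (simp only: wform_add1 wform_scal1)
    then show "wform d G (tact m n d rho q p x s) (y s) = (if s = q then wform d G (x p) (y q) else 0) + sg s * wform d G (mv d (rho q p) (x s)) (y s)"
      by simp
  qed
  have "tform m n d G x (tact m n d rho p q y) = (\<Sum>s\<in>idx m n. (if s = p then wform d G (x p) (y q) else 0) + sg s * wform d G (mv d (rho q p) (x s)) (y s))"
    unfolding tform_def by (rule sum.cong) (auto simp: L)
  also have "\<dots> = wform d G (x p) (y q) + (\<Sum>s\<in>idx m n. sg s * wform d G (mv d (rho q p) (x s)) (y s))"
    using pq finite_idx by (simp add: sum.distrib)
  also have "\<dots> = (\<Sum>s\<in>idx m n. (if s = q then wform d G (x p) (y q) else 0) + sg s * wform d G (mv d (rho q p) (x s)) (y s))"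
    using pq finite_idx by (simp add: sum.distrib)
  also have "\<dots> = tform m n d G (tact m n d rho q p x) y"
    unfolding tform_def by (rule sum.cong) (auto simp: R)
  finally show ?thesis .
qed

lemma tact_es:
  assumes "s \<in> idx m n" "w \<in> vecs d" "p \<in> idx m n"
  shows "tact m n d rho p q (es s w) = (\<lambda>s' j. (if q = s then 1 else 0) * es p w s' j
     + (-1) ^ ((par m p + par m q) * par m s) * es s (mv d (rho p q) w) s' j)"
  using assms by (auto simp: tact_def es_def mv_def vecs_def fun_eq_iff if_distrib cong: if_cong)

theorem lemma8:
  fixes m n d :: nat
    and wpar :: "nat \<Rightarrow> bool"
    and rho :: "nat \<Rightarrow> nat \<Rightarrow> nat \<Rightarrow> nat \<Rightarrow> complex"
    and G :: "nat \<Rightarrow> nat \<Rightarrow> complex"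
    and w0 :: "nat \<Rightarrow> complex"
    and v :: "nat \<Rightarrow> nat \<Rightarrow> complex"
  assumes "irreducible_module m n d wpar rho"
    and "hw_vector m n d rho w0"
    and "invariant_nondeg_form m n d rho G"
    and "maximal_weight_vector m n d rho v"
    and "v \<noteq> (\<lambda>_ _. 0)"
  shows "\<exists>y\<in>tvecs m n d. (\<forall>s. y s \<in> V0 m n d rho w0) \<and> tform m n d G v y \<noteq> 0"
proof (rule ccontr)
  assume H0: "\<not> ?thesis"
  then have H: "\<And>y. y \<in> tvecs m n d \<Longrightarrow> (\<forall>s. y s \<in> V0 m n d rho w0) \<Longrightarrow> tform m n d G v y = 0" by blast
  note irr = assms(1) and hw = assms(2) and inv = assms(3)
  have vt: "v \<in> tvecs m n d" and vlow: "\<And>p q. p \<in> idx m n \<Longrightarrow> q \<in> idx m n \<Longrightarrow> p < q \<Longrightarrow> tact m n d rho p q v = (\<lambda>_ _. 0)"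
    using assms(4) unfolding maximal_weight_vector_def by auto
  have nd: "\<And>x. x \<in> vecs d \<Longrightarrow> x \<noteq> (\<lambda>_. 0) \<Longrightarrow> \<exists>w\<in>vecs d. wform d G x w \<noteq> 0"
    using inv unfolding invariant_nondeg_form_def by blast
  have w0v: "w0 \<in> vecs d" using hw hw_vector_def by blast
  have V0fam: "vecs d \<in> {U. lin_sub d U \<and> w0 \<in> U \<and>
      (\<forall>p\<in>idx m n. \<forall>q\<in>idx m n. (p \<le> m \<longleftrightarrow> q \<le> m) \<longrightarrow> (\<forall>u\<in>U. mv d (rho p q) u \<in> U))}"
    using lin_sub_vecs w0v vecs_mv by blast
  have V0w0: "w0 \<in> V0 m n d rho w0" unfolding V0_def by blast
  have V00: "(\<lambda>_. 0) \<in> V0 m n d rho w0" unfolding V0_def using ls_zero by blast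
  define D where "D = {w \<in> vecs d. \<forall>s\<in>idx m n. wform d G (v s) w = 0}"
  have "lin_sub d D" unfolding lin_sub_def
  proof (intro conjI ballI allI)
    show "D \<subseteq> vecs d" unfolding D_def by blast
    show "(\<lambda>_. 0) \<in> D" unfolding D_def using ls_zero[OF lin_sub_vecs] by (simp add: wform_zero2)
  next
    fix x y assume "x \<in> D" "y \<in> D"
    then show "(\<lambda>i. x i + y i) \<in> D" unfolding D_def using ls_add[OF lin_sub_vecs] by (simp add: wform_add2)
  next
    fix c x assume "x \<in> D"
    then show "(\<lambda>i. c * x i) \<in> D" unfolding D_def using ls_scal[OF lin_sub_vecs] by (simp add: wform_scal2)
  qed
  moreover have "w0 \<in> D" unfolding D_def
  proof (intro CollectI conjI ballI)
    show "w0 \<in> vecs d" by (rule w0v)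
    fix s assume s: "s \<in> idx m n"
    have "es s w0 \<in> tvecs m n d" using s w0v by (auto simp: es_def tvecs_def vecs_def)
    moreover have "\<forall>s'. es s w0 s' \<in> V0 m n d rho w0"
    proof
      fix s' show "es s w0 s' \<in> V0 m n d rho w0"
        by (cases "s' = s") (simp_all add: es_def V0w0 V00)
    qed
    ultimately have "tform m n d G v (es s w0) = 0" using H by blast
    then show "wform d G (v s) w0 = 0" using tform_es[OF s] by simp
  qed
  moreover have "\<forall>p\<in>idx m n. \<forall>q\<in>idx m n. q < p \<longrightarrow> (\<forall>t\<in>D. mv d (rho p q) t \<in> D)"
  proof (intro ballI impI)
    fix p q w assume pq: "p \<in> idx m n" "q \<in> idx m n" "q < p" and w: "w \<in> D"
    have wv: "w \<in> vecs d" and wD: "\<And>s. s \<in> idx m n \<Longrightarrow> wform d G (v s) w = 0" using w D_def by auto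
    show "mv d (rho p q) w \<in> D" unfolding D_def
    proof (intro CollectI conjI ballI)
      show "mv d (rho p q) w \<in> vecs d" by (rule vecs_mv)
      fix s assume s: "s \<in> idx m n"
      have et: "es s w \<in> tvecs m n d" using s wv by (auto simp: es_def tvecs_def vecs_def)
      have "tform m n d G v (tact m n d rho p q (es s w)) = tform m n d G (tact m n d rho q p v) (es s w)"
        by (rule tact_inv[OF inv vt et pq(1,2)])
      also have "\<dots> = 0" using vlow[OF pq(2,1,3)] unfolding tform_def by (simp add: wform_zero1)
      finally have z: "tform m n d G v (tact m n d rho p q (es s w)) = 0" .
      have "tform m n d G v (tact m n d rho p q (es s w)) =
         cnj (if q = s then 1 else 0) * tform m n d G v (es p w)
         + cnj ((-1) ^ ((par m p + par m q) * par m s)) * tform m n d G v (es s (mv d (rho p q) w))"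
        unfolding tact_es[OF s wv pq(1)] by (rule tform_lin2)
      also have "\<dots> = (-1) ^ ((par m p + par m q) * par m s) * wform d G (v s) (mv d (rho p q) w)"
        using tform_es[OF pq(1)] tform_es[OF s] wD[OF pq(1)] by simp
      finally show "wform d G (v s) (mv d (rho p q) w) = 0" using z by simp
    qed
  qed
  ultimately have full: "vecs d \<subseteq> D" by (rule gen_full[OF irr hw inv])
  have "\<And>s. v s = (\<lambda>_. 0)"
  proof -
    fix s
    show "v s = (\<lambda>_. 0)"
    proof (cases "s \<in> idx m n")
      case False then show ?thesis using vt by (auto simp: tvecs_def)
    next
      case True
      have "v s \<in> vecs d" using vt by (auto simp: tvecs_def vecs_def)
      moreover have "\<forall>w\<in>vecs d. wform d G (v s) w = 0" using full True D_def by blast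
      ultimately show ?thesis using nd by blast
    qed
  qed
  then have "v = (\<lambda>_ _. 0)" by blast
  then show False using assms(5) by blast
qed


end
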